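(* Let $p>2$ be a prime which is not a Wieferich prime, and let $n$ be a positive integer not divisible by $p$. Then $P(p^2,n)=pP(p,n)$ and $P(p^3,n)=p^2P(p,n)$.
   Context: For positive integers $m,n$, let $\mathbf{Z}_m$ be the integers modulo $m$ and $T:\mathbf{Z}_m^n\to\mathbf{Z}_m^n$, $T(a_0,\dots,a_{n-1})=(a_0+a_1,a_1+a_2,\dots,a_{n-1}+a_0)$. For $\mathbf{a}\in\mathbf{Z}_m^n$ the cycle length of $(T^k\mathbf{a})_{k\ge0}$ is the smallest positive integer $P$ such that there is $N$ with $T^{k+P}\mathbf{a}=T^k\mathbf{a}$ for all $k\ge N$. $P(m,n)$ denotes the maximum of these cycle lengths over all $\mathbf{a}\in\mathbf{Z}_m^n$. A prime $p$ is a Wieferich prime if $2^{p-1}\equiv1\pmod{p^2}$. *)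

theory Defs
  imports "HOL-Number_Theory.Number_Theory"
begin

text \<open>Elements of Z_m^n are represented as functions nat => nat whose
  entries at indices i < n lie in {0..<m} and which vanish at indices >= n.\<close>

definition zvecs :: "nat \<Rightarrow> nat \<Rightarrow> (nat \<Rightarrow> nat) set" where
  "zvecs m n = {a. (\<forall>i<n. a i < m) \<and> (\<forall>i\<ge>n. a i = 0)}"

definition Tmap :: "nat \<Rightarrow> nat \<Rightarrow> (nat \<Rightarrow> nat) \<Rightarrow> (nat \<Rightarrow> nat)" where
  "Tmap m n a = (\<lambda>i. if i < n then (a i + a ((i + 1) mod n)) mod m else 0)"

definition cycle_length :: "nat \<Rightarrow> nat \<Rightarrow> (nat \<Rightarrow> nat) \<Rightarrow> nat" where
  "cycle_length m n a =
     (LEAST P. 0 < P \<and> (\<exists>N. \<forall>k\<ge>N. (Tmap m n ^^ (k + P)) a = (Tmap m n ^^ k) a))"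

definition Pmax :: "nat \<Rightarrow> nat \<Rightarrow> nat" where
  "Pmax m n = Max (cycle_length m n ` zvecs m n)"

definition wieferich :: "nat \<Rightarrow> bool" where
  "wieferich p \<longleftrightarrow> prime p \<and> [2 ^ (p - 1) = 1] (mod p ^ 2)"

end

theory Submission
  imports Defs
begin

lemma binom_lift:
  fixes p u :: int and k :: nat
  shows "p^3 dvd (1 + p*u)^k - (1 + int k * p * u + int (k choose 2) * p^2 * u^2)"
proof (induction k)
  case 0
  then show ?case by (simp add: binomial_eq_0)
next
  case (Suc k)
  then obtain r where r: "(1 + p*u)^k = (1 + int k * p * u + int (k choose 2) * p^2 * u^2) + p^3 * r"
    unfolding dvd_def by (auto simp: algebra_simps)
  have c: "int (Suc k choose 2) = int (k choose 2) + int k"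
    by (simp add: numeral_2_eq_2)
  have "(1 + p*u)^Suc k - (1 + int (Suc k) * p * u + int (Suc k choose 2) * p^2 * u^2)
      = p^3 * (r * (1 + p*u) + int (k choose 2) * u^3)"
    unfolding power_Suc r c by (simp add: algebra_simps power2_eq_square power3_eq_cube)
  then show ?case by simp
qed

lemma cong_nat_int_dvd: "[(a::nat) = 1] (mod m) \<longleftrightarrow> int m dvd int a - 1"
proof -
  have "[(a::nat) = 1] (mod m) \<longleftrightarrow> [int a = int 1] (mod int m)" by (rule cong_int_iff[symmetric])
  also have "\<dots> \<longleftrightarrow> int m dvd int a - 1" by (simp add: cong_iff_dvd_diff)
  finally show ?thesis .
qed

lemma nt3:
  fixes p :: nat
  assumes p: "prime p" "p > 2" and nw: "\<not> [2^(p-1) = 1] (mod p^2)"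
  shows "\<not> [2^(p*(p-1)) = 1] (mod p^3)"
proof
  assume h: "[2^(p*(p-1)) = 1] (mod p^3)"
  have "\<not> p dvd 2" using p(2) by (auto dest: dvd_imp_le)
  then have "[2^(p-1) = 1] (mod p)" using fermat_theorem[OF p(1)] by blast
  then have "int p dvd int (2^(p-1)) - 1"
    by (simp only: cong_nat_int_dvd)
  then obtain u where u: "int (2^(p-1)) = 1 + int p * u"
    unfolding dvd_def by (auto simp: algebra_simps)
  have odd: "odd p" using p by (simp add: prime_odd_nat)
  have c2: "int (p choose 2) = int p * int ((p - 1) div 2)"
  proof -
    from odd obtain q where q: "p = 2*q+1" by (metis oddE)
    have "(2*q+1)*(2*q) = 2*((2*q+1)*q)" by simp
    then have "p choose 2 = p * q" unfolding choose_two q by simp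
    moreover have "(p - 1) div 2 = q" using q by simp
    ultimately show ?thesis by simp
  qed
  have A: "int p^3 dvd (1 + int p*u)^p - (1 + int p * int p * u + int (p choose 2) * int p^2 * u^2)"
    by (rule binom_lift)
  have B: "int p^3 dvd int p^2 * int p * (int ((p - 1) div 2)) * u^2"
    by (simp add: power3_eq_cube power2_eq_square)
  have "(2::nat)^(p*(p-1)) = (2^(p-1))^p"
    by (metis power_mult mult.commute)
  then have "int (2^(p*(p-1))) = (1 + int p*u)^p"
    using u by (metis of_nat_power)
  moreover have "int (p^3) dvd int (2^(p*(p-1))) - 1"
    using h by (simp only: cong_nat_int_dvd)
  ultimately have C: "int p^3 dvd (1 + int p*u)^p - 1" by simp
  define X where "X = (1 + int p*u)^p"
  have E: "(X - 1) - (X - (1 + int p * int p * u + int (p choose 2) * int p^2 * u^2)) - int p^2 * int p * (int ((p - 1) div 2)) * u^2 = int p^2 * u"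
    unfolding c2 by (simp add: power2_eq_square algebra_simps)
  have "int p^3 dvd (X - 1) - (X - (1 + int p * int p * u + int (p choose 2) * int p^2 * u^2)) - int p^2 * int p * (int ((p - 1) div 2)) * u^2"
    using dvd_diff[OF dvd_diff[OF C A] B] unfolding X_def .
  then have D: "int p^3 dvd int p^2 * u"
    unfolding E .
  have "int p \<noteq> 0" using p by simp
  then have "int p dvd u" using D
    by (simp add: power3_eq_cube power2_eq_square mult.assoc)
  then have "int (p^2) dvd int (2^(p-1)) - 1" using u
    by (auto simp: power2_eq_square)
  then have "[2^(p-1) = 1] (mod p^2)"
    by (simp only: cong_nat_int_dvd)
  with nw show False by simp
qed

lemma coprime_2_pk:
  fixes p :: nat assumes "prime p" "p > 2" shows "coprime 2 (p^k)"
proof -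
  have "\<not> p dvd 2" using assms(2) by (auto dest: dvd_imp_le)
  then have "coprime p 2" by (rule prime_imp_coprime[OF assms(1)])
  then show ?thesis by (simp add: coprime_commute)
qed

lemma nt1:
  fixes p Q :: nat
  assumes p: "prime p" "p > 2" and nQ: "\<not> p dvd Q" and h: "[2^Q = 1] (mod p^2)"
  shows "[2^(p-1) = 1] (mod p^2)"
proof -
  let ?o = "ord (p^2) 2"
  have "[2^totient (p^2) = 1] (mod p^2)" by (rule euler_theorem[OF coprime_2_pk[OF p]])
  then have "?o dvd p * (p - 1)" using totient_prime_power[OF p(1), of 2]
    by (simp add: ord_divides ord_divides')
  moreover have oQ: "?o dvd Q" using h by (simp add: ord_divides ord_divides')
  have "\<not> p dvd ?o" using oQ nQ dvd_trans by blast
  then have "coprime p ?o" by (rule prime_imp_coprime[OF p(1)])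
  then have "coprime ?o p" by (simp add: coprime_commute)
  ultimately have "?o dvd p - 1" by (simp add: coprime_dvd_mult_right_iff)
  then show ?thesis by (simp add: ord_divides ord_divides')
qed

lemma nt2:
  fixes p Q :: nat
  assumes p: "prime p" "p > 2" and nQ: "\<not> p dvd Q" and h: "[2^(p*Q) = 1] (mod p^3)"
  shows "[2^(p*(p-1)) = 1] (mod p^3)"
proof -
  let ?o = "ord (p^3) 2"
  let ?g = "gcd Q (p*(p-1))"
  have "[2^totient (p^3) = 1] (mod p^3)" by (rule euler_theorem[OF coprime_2_pk[OF p]])
  then have o1: "?o dvd p * (p * (p - 1))" using totient_prime_power[OF p(1), of 3]
    by (simp add: ord_divides ord_divides' power2_eq_square mult.assoc)
  have o2: "?o dvd p * Q" using h by (simp add: ord_divides ord_divides')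
  have "?o dvd gcd (p*Q) (p * (p * (p - 1)))" using o1 o2 by simp
  then have og: "?o dvd p * ?g" by (simp add: gcd_mult_distrib_nat)
  have "\<not> p dvd ?g" using nQ dvd_trans by (metis gcd_dvd1)
  then have "coprime p ?g" by (rule prime_imp_coprime[OF p(1)])
  then have "coprime ?g p" by (simp add: coprime_commute)
  moreover have "?g dvd p * (p - 1)" by (rule gcd_dvd2)
  ultimately have "?g dvd p - 1" using coprime_dvd_mult_right_iff by blast
  then have "p * ?g dvd p * (p - 1)" by simp
  then have "?o dvd p * (p - 1)" using og dvd_trans by blast
  then show ?thesis by (simp add: ord_divides ord_divides')
qed

definition Uop :: "nat \<Rightarrow> (nat \<Rightarrow> int) \<Rightarrow> (nat \<Rightarrow> int)" where
  "Uop n v = (\<lambda>i. v i + v ((i + 1) mod n))"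

lemma U_suc: "(Uop n ^^ Suc k) v i = (Uop n ^^ k) v i + (Uop n ^^ k) v ((i+1) mod n)"
  by (simp add: Uop_def)

lemma U_add: "(Uop n ^^ (a + b)) v = (Uop n ^^ a) ((Uop n ^^ b) v)"
  by (simp add: funpow_add)

lemma U_lin_sum: "(Uop n ^^ k) (\<lambda>i. \<Sum>l\<in>L. w l i) i = (\<Sum>l\<in>L. (Uop n ^^ k) (w l) i)"
  by (induction k arbitrary: i) (simp_all add: Uop_def sum.distrib)

lemma U_scal: "(Uop n ^^ k) (\<lambda>i. c * x i) i = c * (Uop n ^^ k) x i"
  by (induction k arbitrary: i) (simp_all add: Uop_def distrib_left)

lemma U_lin: "(Uop n ^^ k) (\<lambda>i. \<Sum>l\<in>L. c l * w l i) i = (\<Sum>l\<in>L. c l * (Uop n ^^ k) (w l) i)"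
  by (simp add: U_lin_sum U_scal)

lemma U_local: "\<forall>i<n. x i = y i \<Longrightarrow> i < n \<Longrightarrow> (Uop n ^^ k) x i = (Uop n ^^ k) y i"
proof (induction k arbitrary: i)
  case 0
  then show ?case by simp
next
  case (Suc k)
  have "(i + 1) mod n < n" using Suc.prems by simp
  then show ?case using Suc by (simp add: Uop_def)
qed

lemma U_shift: "i < n \<Longrightarrow> (Uop n ^^ k) (\<lambda>j. x ((j + r) mod n)) i = (Uop n ^^ k) x ((i + r) mod n)"
proof (induction k arbitrary: i)
  case 0
  then show ?case by simp
next
  case (Suc k)
  have i1: "(i + 1) mod n < n" using Suc.prems by simp
  have e: "((i + 1) mod n + r) mod n = ((i + r) mod n + 1) mod n"
    unfolding mod_add_left_eq by (simp add: ac_simps)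
  show ?case by (simp only: U_suc Suc.IH[OF Suc.prems] Suc.IH[OF i1] e)
qed

lemma U_const: "(Uop n ^^ k) (\<lambda>_. 1) i = 2^k"
  by (induction k arbitrary: i) (simp_all add: Uop_def)

lemma pascal_sum:
  fixes y :: "nat \<Rightarrow> int"
  shows "(\<Sum>r\<le>Suc k. of_nat (Suc k choose r) * y r) =
         (\<Sum>r\<le>k. of_nat (k choose r) * y r) + (\<Sum>r\<le>k. of_nat (k choose r) * y (Suc r))"
proof -
  have 1: "(\<Sum>r\<le>Suc k. of_nat (Suc k choose r) * y r) =
      y 0 + (\<Sum>r\<le>k. of_nat (k choose r) * y (Suc r)) + (\<Sum>r\<le>k. of_nat (k choose Suc r) * y (Suc r))"
    by (simp only: sum.atMost_Suc_shift) (simp add: sum.distrib algebra_simps)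
  have 2: "(\<Sum>r\<le>Suc k. of_nat (k choose r) * y r) = (\<Sum>r\<le>k. of_nat (k choose r) * y r)"
    by simp
  have 3: "(\<Sum>r\<le>Suc k. of_nat (k choose r) * y r) = y 0 + (\<Sum>r\<le>k. of_nat (k choose Suc r) * y (Suc r))"
    by (simp only: sum.atMost_Suc_shift) simp
  have 4: "(\<Sum>r\<le>k. of_nat (k choose r) * y r) = y 0 + (\<Sum>r\<le>k. of_nat (k choose Suc r) * y (Suc r))"
    using 2 3 by linarith
  show ?thesis using 1 4 by linarith
qed

lemma U_binom: "i < n \<Longrightarrow> (Uop n ^^ k) x i = (\<Sum>r\<le>k. of_nat (k choose r) * x ((i + r) mod n))"
proof (induction k arbitrary: i)
  case 0
  then show ?case by simp
next
  case (Suc k)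
  have i1: "(i + 1) mod n < n" using Suc.prems by simp
  have e: "\<And>r. ((i + 1) mod n + r) mod n = (i + Suc r) mod n"
    by (simp add: mod_add_left_eq)
  have "(Uop n ^^ Suc k) x i = (\<Sum>r\<le>k. of_nat (k choose r) * x ((i + r) mod n)) + (\<Sum>r\<le>k. of_nat (k choose r) * x ((i + Suc r) mod n))"
    by (simp only: U_suc Suc.IH[OF Suc.prems] Suc.IH[OF i1] e)
  also have "\<dots> = (\<Sum>r\<le>Suc k. of_nat (Suc k choose r) * x ((i + r) mod n))"
    by (subst pascal_sum) (rule refl)
  finally show ?case .
qed

lemma prime_dvd_choose_pow:
  fixes p f r :: nat
  assumes p: "prime p" and r: "0 < r" "r < p^f"
  shows "p dvd (p^f choose r)"
proof (rule ccontr)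
  assume h: "\<not> p dvd (p^f choose r)"
  have "r * (p^f choose r) = p^f * ((p^f - 1) choose (r - 1))"
    using times_binomial_minus1_eq[OF r(1)] .
  then have "p^f dvd r * (p^f choose r)" by simp
  moreover have "coprime (p^f) (p^f choose r)"
    using prime_imp_coprime[OF p h] by simp
  ultimately have "p^f dvd r" using coprime_dvd_mult_left_iff by blast
  then show False using r by (auto dest: dvd_imp_le)
qed

definition Per :: "nat \<Rightarrow> nat \<Rightarrow> nat \<Rightarrow> bool" where
  "Per n m Q \<longleftrightarrow> (\<exists>N. \<forall>v i. i < n \<longrightarrow> int m dvd (Uop n ^^ (N + Q)) v i - (Uop n ^^ N) v i)"

definition minper :: "nat \<Rightarrow> nat \<Rightarrow> nat" where
  "minper n m = (LEAST Q. 0 < Q \<and> Per n m Q)"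

lemma Per_ge:
  assumes h: "\<forall>v i. i < n \<longrightarrow> int m dvd (Uop n ^^ (N + Q)) v i - (Uop n ^^ N) v i"
    and k: "N \<le> k" and i: "i < n"
  shows "int m dvd (Uop n ^^ (k + Q)) v i - (Uop n ^^ k) v i"
proof -
  have "k + Q = (N + Q) + (k - N)" using k by simp
  then have e1: "(Uop n ^^ (k + Q)) v = (Uop n ^^ (N + Q)) ((Uop n ^^ (k - N)) v)"
    by (metis U_add)
  have "k = N + (k - N)" using k by simp
  then have e2: "(Uop n ^^ k) v = (Uop n ^^ N) ((Uop n ^^ (k - N)) v)"
    by (metis U_add)
  show ?thesis unfolding e1 e2 using h i by blast
qed

lemma Per_mult:
  assumes h: "\<forall>v i. i < n \<longrightarrow> int m dvd (Uop n ^^ (N + Q)) v i - (Uop n ^^ N) v i"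
  shows "\<forall>v i. i < n \<longrightarrow> int m dvd (Uop n ^^ (N + c * Q)) v i - (Uop n ^^ N) v i"
proof (induction c)
  case 0
  then show ?case by simp
next
  case (Suc c)
  show ?case
  proof (intro allI impI)
    fix v i assume i: "i < n"
    have e1: "(Uop n ^^ (N + Suc c * Q)) v = (Uop n ^^ (N + Q)) ((Uop n ^^ (c * Q)) v)"
      by (simp flip: U_add add: algebra_simps)
    have e2: "(Uop n ^^ N) ((Uop n ^^ (c * Q)) v) = (Uop n ^^ (N + c * Q)) v"
      by (simp flip: U_add)
    have "(Uop n ^^ (N + Suc c * Q)) v i - (Uop n ^^ N) v i =
      ((Uop n ^^ (N + Q)) ((Uop n ^^ (c * Q)) v) i - (Uop n ^^ N) ((Uop n ^^ (c * Q)) v) i)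
      + ((Uop n ^^ (N + c * Q)) v i - (Uop n ^^ N) v i)"
      unfolding e1 e2 by simp
    then show "int m dvd (Uop n ^^ (N + Suc c * Q)) v i - (Uop n ^^ N) v i"
      using h Suc.IH i by (metis dvd_add)
  qed
qed

lemma minper:
  assumes "Per n m Q" "0 < Q"
  shows "0 < minper n m \<and> Per n m (minper n m) \<and> minper n m dvd Q"
proof -
  let ?P = "minper n m"
  have ex: "0 < ?P \<and> Per n m ?P" unfolding minper_def
    by (rule LeastI[of _ Q]) (use assms in auto)
  then obtain N1 where N1: "\<forall>v i. i < n \<longrightarrow> int m dvd (Uop n ^^ (N1 + ?P)) v i - (Uop n ^^ N1) v i"
    unfolding Per_def by blast
  from assms obtain N2 where N2: "\<forall>v i. i < n \<longrightarrow> int m dvd (Uop n ^^ (N2 + Q)) v i - (Uop n ^^ N2) v i"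
    unfolding Per_def by blast
  define r where "r = Q mod ?P"
  define c where "c = Q div ?P"
  have Qe: "Q = c * ?P + r" unfolding r_def c_def by (rule div_mult_mod_eq[symmetric])
  have "r = 0"
  proof (rule ccontr)
    assume r0: "r \<noteq> 0"
    have rl: "r < ?P" unfolding r_def using ex by simp
    let ?N = "N1 + N2"
    have A: "\<forall>v i. i < n \<longrightarrow> int m dvd (Uop n ^^ ((?N + r) + ?P)) v i - (Uop n ^^ (?N + r)) v i"
      using Per_ge[OF N1] by simp
    have B: "\<forall>v i. i < n \<longrightarrow> int m dvd (Uop n ^^ ((?N + r) + c * ?P)) v i - (Uop n ^^ (?N + r)) v i"
      by (rule Per_mult[OF A])
    have "Per n m r" unfolding Per_def
    proof (intro exI allI impI)
      fix v i assume i: "i < n"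
      have "(?N + r) + c * ?P = ?N + Q" using Qe by simp
      then have B': "int m dvd (Uop n ^^ (?N + Q)) v i - (Uop n ^^ (?N + r)) v i"
        using B i by metis
      have C: "int m dvd (Uop n ^^ (?N + Q)) v i - (Uop n ^^ ?N) v i"
        using Per_ge[OF N2 _ i] by simp
      have "(Uop n ^^ (?N + r)) v i - (Uop n ^^ ?N) v i =
        ((Uop n ^^ (?N + Q)) v i - (Uop n ^^ ?N) v i) - ((Uop n ^^ (?N + Q)) v i - (Uop n ^^ (?N + r)) v i)"
        by simp
      then show "int m dvd (Uop n ^^ (?N + r)) v i - (Uop n ^^ ?N) v i"
        using B' C by (metis dvd_diff)
    qed
    then have "?P \<le> r" unfolding minper_def using r0 by (intro Least_le) simp
    then show False using rl by simp
  qed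
  then show ?thesis using ex Qe by simp
qed

lemma Per_down: "m' dvd m \<Longrightarrow> Per n m Q \<Longrightarrow> Per n m' Q"
  unfolding Per_def by (meson dvd_trans of_nat_dvd_iff)

lemma Per_lift:
  fixes p j Q :: nat
  assumes j: "1 \<le> j" and P: "Per n (p^j) Q"
  shows "Per n (p^Suc j) (p * Q)"
proof -
  from P obtain N where h: "\<forall>v i. i < n \<longrightarrow> int (p^j) dvd (Uop n ^^ (N + Q)) v i - (Uop n ^^ N) v i"
    unfolding Per_def by blast
  define a where "a = N + Q"
  define b where "b = N"
  have ha: "\<forall>v i. i < n \<longrightarrow> int (p^j) dvd (Uop n ^^ a) v i - (Uop n ^^ b) v i"
    using h unfolding a_def b_def .
  have pj: "int p dvd int (p^j)" using j by (simp add: dvd_power)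
  have hp: "\<forall>v i. i < n \<longrightarrow> int p dvd (Uop n ^^ a) v i - (Uop n ^^ b) v i"
    using ha pj dvd_trans by blast
  have step1: "\<forall>c v i. i < n \<longrightarrow> int p dvd (Uop n ^^ (a * l + c)) v i - (Uop n ^^ (b * l + c)) v i" for l
  proof (induction l)
    case 0
    then show ?case by simp
  next
    case (Suc l)
    show ?case
    proof (intro allI impI)
      fix c v i assume i: "i < n"
      let ?w = "(Uop n ^^ (a * l + c)) v"
      have e1: "(Uop n ^^ (a * Suc l + c)) v = (Uop n ^^ a) ?w"
        by (simp flip: U_add add: algebra_simps)
      have e2: "(Uop n ^^ b) ?w = (Uop n ^^ (a * l + (c + b))) v"
        by (simp flip: U_add add: algebra_simps)
      have e3: "b * Suc l + c = b * l + (c + b)" by simp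
      have "(Uop n ^^ (a * Suc l + c)) v i - (Uop n ^^ (b * Suc l + c)) v i =
        ((Uop n ^^ a) ?w i - (Uop n ^^ b) ?w i) + ((Uop n ^^ (a * l + (c + b))) v i - (Uop n ^^ (b * l + (c + b))) v i)"
        unfolding e1 e2 e3 by simp
      then show "int p dvd (Uop n ^^ (a * Suc l + c)) v i - (Uop n ^^ (b * Suc l + c)) v i"
        using hp Suc.IH i by (metis dvd_add)
    qed
  qed
  show ?thesis unfolding Per_def
  proof (intro exI allI impI)
    fix v i assume i: "i < n"
    define w where "w l = (Uop n ^^ (a * l + b * (p - 1 - l))) v" for l
    define W where "W i = (\<Sum>l<p. w l i)" for i
    define Z where "Z i = W i div int p" for i
    have Wdvd: "int p dvd W i" if i: "i < n" for i
    proof -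
      have "W i = (\<Sum>l<p. (w l i - (Uop n ^^ (b * (p - 1))) v i)) + int p * (Uop n ^^ (b * (p - 1))) v i"
        unfolding W_def by (simp add: sum_subtractf)
      moreover have "int p dvd (\<Sum>l<p. (w l i - (Uop n ^^ (b * (p - 1))) v i))"
      proof (rule dvd_sum)
        fix l assume l: "l \<in> {..<p}"
        have "b * (p - 1) = b * l + b * (p - 1 - l)" using l by (simp flip: distrib_left)
        then show "int p dvd w l i - (Uop n ^^ (b * (p - 1))) v i"
          unfolding w_def using step1 i by metis
      qed
      ultimately show ?thesis by simp
    qed
    have WZ: "\<forall>i<n. W i = int p * Z i" unfolding Z_def using Wdvd by simp
    have tel: "(Uop n ^^ a) W i - (Uop n ^^ b) W i = (Uop n ^^ (a * p)) v i - (Uop n ^^ (b * p)) v i"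
    proof -
      define f where "f l = (Uop n ^^ (a * l + b * (p - l))) v i" for l
      have "(Uop n ^^ a) W i - (Uop n ^^ b) W i = (\<Sum>l<p. (Uop n ^^ a) (w l) i - (Uop n ^^ b) (w l) i)"
        unfolding W_def U_lin_sum by (simp add: sum_subtractf)
      also have "\<dots> = (\<Sum>l<p. f (Suc l) - f l)"
      proof (rule sum.cong[OF refl])
        fix l assume l: "l \<in> {..<p}"
        have x1: "a + (a * l + b * (p - 1 - l)) = a * Suc l + b * (p - Suc l)" by simp
        have q: "p - l = Suc (p - 1 - l)" using l by auto
        have x2: "b + (a * l + b * (p - 1 - l)) = a * l + b * (p - l)"
          unfolding q by simp
        show "(Uop n ^^ a) (w l) i - (Uop n ^^ b) (w l) i = f (Suc l) - f l"
          unfolding w_def f_def by (simp only: x1 x2 flip: U_add)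
      qed
      also have "\<dots> = f p - f 0" by (rule sum_lessThan_telescope)
      finally show ?thesis unfolding f_def by (simp add: mult.commute)
    qed
    have "(Uop n ^^ a) W i = int p * (Uop n ^^ a) Z i"
      using U_local[OF WZ i] U_scal by metis
    moreover have "(Uop n ^^ b) W i = int p * (Uop n ^^ b) Z i"
      using U_local[OF WZ i] U_scal by metis
    ultimately have "(Uop n ^^ (a * p)) v i - (Uop n ^^ (b * p)) v i = int p * ((Uop n ^^ a) Z i - (Uop n ^^ b) Z i)"
      using tel by (simp add: algebra_simps)
    moreover have "int (p^j) dvd (Uop n ^^ a) Z i - (Uop n ^^ b) Z i" using ha i by blast
    ultimately have "int (p ^ Suc j) dvd (Uop n ^^ (a * p)) v i - (Uop n ^^ (b * p)) v i"
      by (simp add: mult_dvd_mono)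
    moreover have "a * p = p * N + p * Q" "b * p = p * N" unfolding a_def b_def by (simp_all add: algebra_simps)
    ultimately show "int (p ^ Suc j) dvd (Uop n ^^ (p * N + p * Q)) v i - (Uop n ^^ (p * N)) v i"
      by simp
  qed
qed

lemma Per_two:
  assumes "coprime 2 m" "Per n m Q" "0 < n"
  shows "[2^Q = 1] (mod m)"
proof -
  from assms(2) obtain N where h: "\<forall>v i. i < n \<longrightarrow> int m dvd (Uop n ^^ (N + Q)) v i - (Uop n ^^ N) v i"
    unfolding Per_def by blast
  then have "int m dvd (Uop n ^^ (N + Q)) (\<lambda>_. 1) 0 - (Uop n ^^ N) (\<lambda>_. 1) 0" using assms(3) by blast
  then have "int m dvd 2^N * (2^Q - 1)" by (simp add: U_const power_add algebra_simps)
  moreover have "coprime (int m) (2^N)"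
    using assms(1) by (simp add: coprime_commute)
  ultimately have "int m dvd 2^Q - 1" using coprime_dvd_mult_right_iff by blast
  then have "int m dvd int (2^Q) - 1" by simp
  then show ?thesis by (simp only: cong_nat_int_dvd)
qed

lemma Per_frob:
  fixes p n :: nat
  assumes p: "prime p" and n: "0 < n" and pn: "\<not> p dvd n"
  shows "Per n p (p ^ totient n - 1) \<and> 0 < p ^ totient n - 1 \<and> \<not> p dvd (p ^ totient n - 1)"
proof -
  let ?K = "p ^ totient n"
  have cop: "coprime p n" using prime_imp_coprime[OF p pn] .
  have cK: "[?K = 1] (mod n)" by (rule euler_theorem[OF cop])
  have tp: "totient n > 0" using n by simp
  have p2: "2 \<le> p" using p by (simp add: prime_ge_2_nat)
  have K2: "2 \<le> ?K"
  proof -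
    have "1 \<le> totient n" using tp by linarith
    then have "p ^ 1 \<le> ?K" using p2 by (intro power_increasing) auto
    then show ?thesis using p2 by simp
  qed
  have pK: "p dvd ?K" using tp by (simp add: dvd_power)
  have ndvd: "\<not> p dvd (?K - 1)"
  proof
    assume "p dvd ?K - 1"
    then have "p dvd ?K - (?K - 1)" using pK by (simp add: dvd_diff_nat)
    then show False using K2 p2 by simp
  qed
  have "Per n p (?K - 1)" unfolding Per_def
  proof (intro exI[of _ 1] allI impI)
    fix v :: "nat \<Rightarrow> int" and i :: nat assume i: "i < n"
    define y where "y r = v ((i + r) mod n)" for r
    have y0: "y 0 = v i" unfolding y_def using i by simp
    have yK: "y ?K = v ((i + 1) mod n)"
    proof -
      have "(i + ?K) mod n = (i + 1) mod n" using cK unfolding cong_def by (metis mod_add_right_eq)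
      then show ?thesis unfolding y_def by simp
    qed
    have e1: "(Uop n ^^ (1 + (?K - 1))) v i = (\<Sum>r\<le>?K. of_nat (?K choose r) * y r)"
    proof -
      have "1 + (?K - 1) = ?K" using K2 by simp
      then show ?thesis using U_binom[OF i, of ?K v] unfolding y_def by simp
    qed
    have e2: "(Uop n ^^ 1) v i = y 0 + y ?K" using y0 yK by (simp add: Uop_def)
    have fin: "finite {..?K}" by simp
    have s: "(\<Sum>r\<le>?K. of_nat (?K choose r) * y r) = y ?K + (y 0 + (\<Sum>r\<in>{..?K} - {?K} - {0}. of_nat (?K choose r) * y r))"
    proof -
      let ?g = "\<lambda>r. of_nat (?K choose r) * y r"
      have "sum ?g {..?K} = ?g ?K + sum ?g ({..?K} - {?K})"
        by (rule sum.remove[OF fin]) simp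
      also have "sum ?g ({..?K} - {?K}) = ?g 0 + sum ?g ({..?K} - {?K} - {0})"
        by (rule sum.remove) (use K2 p2 in auto)
      finally show ?thesis by simp
    qed
    have "int p dvd (\<Sum>r\<in>{..?K} - {?K} - {0}. of_nat (?K choose r) * y r)"
    proof (rule dvd_sum)
      fix r assume r: "r \<in> {..?K} - {?K} - {0}"
      then have "0 < r" "r < ?K" by auto
      then have "p dvd (?K choose r)" by (rule prime_dvd_choose_pow[OF p])
      then show "int p dvd of_nat (?K choose r) * y r" by simp
    qed
    then show "int p dvd (Uop n ^^ (1 + (?K - 1))) v i - (Uop n ^^ 1) v i"
      unfolding e1 e2 s by simp
  qed
  then show ?thesis using ndvd K2 by simp
qed

lemma natmod_add:
  assumes "0 < m"
  shows "(nat (X mod int m) + nat (Y mod int m)) mod m = nat ((X + Y) mod int m)"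
proof -
  have "int ((nat (X mod int m) + nat (Y mod int m)) mod m) = (X mod int m + Y mod int m) mod int m"
    using assms by (simp add: of_nat_mod)
  also have "\<dots> = (X + Y) mod int m" by (rule mod_add_eq)
  also have "\<dots> = int (nat ((X + Y) mod int m))" using assms by simp
  finally show ?thesis by (simp only: of_nat_eq_iff)
qed

lemma Tpow:
  assumes m: "0 < m" and n: "0 < n" and a: "a \<in> zvecs m n"
  shows "(Tmap m n ^^ k) a = (\<lambda>i. if i < n then nat ((Uop n ^^ k) (\<lambda>i. int (a i)) i mod int m) else 0)"
proof (induction k)
  case 0
  show ?case
  proof
    fix i
    show "(Tmap m n ^^ 0) a i = (if i < n then nat ((Uop n ^^ 0) (\<lambda>i. int (a i)) i mod int m) else 0)"
    proof (cases "i < n")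
      case True
      then have "a i < m" using a unfolding zvecs_def by blast
      then have "int (a i) mod int m = int (a i)" by simp
      then show ?thesis using True by simp
    next
      case False
      then show ?thesis using a unfolding zvecs_def by simp
    qed
  qed
next
  case (Suc k)
  show ?case
  proof
    fix i
    have i1: "i < n \<Longrightarrow> (i + 1) mod n < n" by simp
    show "(Tmap m n ^^ Suc k) a i = (if i < n then nat ((Uop n ^^ Suc k) (\<lambda>i. int (a i)) i mod int m) else 0)"
    proof -
      have e: "(Tmap m n ^^ Suc k) a = Tmap m n ((Tmap m n ^^ k) a)" by simp
      show ?thesis unfolding e Suc.IH
        using i1 by (simp add: Tmap_def U_suc natmod_add[OF m] del: funpow.simps)
    qed
  qed
qed

lemma ifeq: "((\<lambda>i. if i < n then f i else (0::nat)) = (\<lambda>i. if i < n then g i else 0)) \<longleftrightarrow> (\<forall>i<n. f i = g i)"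
  by (auto simp: fun_eq_iff)

lemma cyc_iff:
  assumes m: "0 < m" and n: "0 < n" and a: "a \<in> zvecs m n"
  shows "(Tmap m n ^^ k1) a = (Tmap m n ^^ k2) a \<longleftrightarrow>
    (\<forall>i<n. int m dvd (Uop n ^^ k1) (\<lambda>i. int (a i)) i - (Uop n ^^ k2) (\<lambda>i. int (a i)) i)"
proof -
  have "\<And>X Y. nat (X mod int m) = nat (Y mod int m) \<longleftrightarrow> X mod int m = Y mod int m"
    using m by (simp add: eq_nat_nat_iff)
  then have "\<And>X Y. nat (X mod int m) = nat (Y mod int m) \<longleftrightarrow> int m dvd X - Y"
    by (simp add: mod_eq_dvd_iff)
  then show ?thesis unfolding Tpow[OF m n a] ifeq by simp
qed

lemma cyc_pred:
  assumes m: "0 < m" and n: "0 < n" and a: "a \<in> zvecs m n" and P: "Per n m Q" "0 < Q"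
  shows "0 < Q \<and> (\<exists>N. \<forall>k\<ge>N. (Tmap m n ^^ (k + Q)) a = (Tmap m n ^^ k) a)"
proof -
  from P obtain N where h: "\<forall>v i. i < n \<longrightarrow> int m dvd (Uop n ^^ (N + Q)) v i - (Uop n ^^ N) v i"
    unfolding Per_def by blast
  have "\<forall>k\<ge>N. (Tmap m n ^^ (k + Q)) a = (Tmap m n ^^ k) a"
    unfolding cyc_iff[OF m n a] using Per_ge[OF h] by blast
  then show ?thesis using P by blast
qed

lemma cl_le:
  assumes m: "0 < m" and n: "0 < n" and a: "a \<in> zvecs m n" and P: "Per n m Q" "0 < Q"
  shows "cycle_length m n a \<le> Q"
  unfolding cycle_length_def by (rule Least_le) (rule cyc_pred[OF assms])

lemma idx: "(i::nat) < n \<Longrightarrow> j < n \<Longrightarrow> ((i + (n - j)) mod n = 0) = (i = j)"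
proof (cases "i < j")
  case True
  assume "i < n" "j < n"
  then have "i + (n - j) < n" using True by arith
  moreover have "0 < i + (n - j)" using True \<open>j < n\<close> by arith
  ultimately
  show ?thesis using True \<open>j < n\<close> by simp
next
  case False
  assume "i < n" "j < n"
  then have eq: "i + (n - j) = (i - j) + n" using False by arith
  have "(i + (n - j)) mod n = (i - j) mod n" unfolding eq by (rule mod_add_self2)
  also have "\<dots> = i - j" using \<open>i < n\<close> by simp
  finally show ?thesis using False by auto
qed

definition evec :: "nat \<Rightarrow> int" where "evec i = (if i = 0 then 1 else 0)"

lemma rep:
  assumes i: "i < n"
  shows "(Uop n ^^ K) v i = (\<Sum>j<n. v j * (Uop n ^^ K) evec ((i + (n - j)) mod n))"
proof -
  have loc: "\<forall>i<n. v i = (\<Sum>j<n. v j * evec ((i + (n - j)) mod n))"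
  proof (intro allI impI)
    fix i assume i: "i < n"
    have "(\<Sum>j<n. v j * evec ((i + (n - j)) mod n)) = (\<Sum>j<n. if i = j then v j else 0)"
    proof (rule sum.cong[OF refl])
      fix j assume "j \<in> {..<n}"
      then have j: "j < n" by simp
      have "evec ((i + (n - j)) mod n) = (if i = j then 1 else 0)"
        unfolding evec_def idx[OF i j] by simp
      then show "v j * evec ((i + (n - j)) mod n) = (if i = j then v j else 0)" by simp
    qed
    also have "\<dots> = v i" using i by simp
    finally show "v i = (\<Sum>j<n. v j * evec ((i + (n - j)) mod n))" by simp
  qed
  have "(Uop n ^^ K) v i = (Uop n ^^ K) (\<lambda>i. \<Sum>j<n. v j * evec ((i + (n - j)) mod n)) i"
    by (rule U_local[OF loc i])
  also have "\<dots> = (\<Sum>j<n. v j * (Uop n ^^ K) (\<lambda>i. evec ((i + (n - j)) mod n)) i)"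
    by (rule U_lin)
  also have "\<dots> = (\<Sum>j<n. v j * (Uop n ^^ K) evec ((i + (n - j)) mod n))"
  proof (rule sum.cong[OF refl])
    fix j
    show "v j * (Uop n ^^ K) (\<lambda>i. evec ((i + (n - j)) mod n)) i = v j * (Uop n ^^ K) evec ((i + (n - j)) mod n)"
      using U_shift[OF i, of K evec "n - j"] by simp
  qed
  finally show ?thesis .
qed

definition e0 :: "nat \<Rightarrow> nat" where "e0 i = (if i = 0 then 1 else 0)"

lemma cl_e0:
  assumes m: "1 < m" and n: "0 < n" and P: "Per n m Q" "0 < Q"
  shows "minper n m \<le> cycle_length m n e0"
proof -
  have m0: "0 < m" using m by simp
  have ez: "e0 \<in> zvecs m n" using m n unfolding zvecs_def e0_def by auto
  let ?C = "cycle_length m n e0"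
  have "0 < ?C \<and> (\<exists>N. \<forall>k\<ge>N. (Tmap m n ^^ (k + ?C)) e0 = (Tmap m n ^^ k) e0)"
    unfolding cycle_length_def by (rule LeastI_ex) (use cyc_pred[OF m0 n ez P] in blast)
  then obtain N where C0: "0 < ?C" and N: "(Tmap m n ^^ (N + ?C)) e0 = (Tmap m n ^^ N) e0"
    by blast
  have ee: "(\<lambda>i. int (e0 i)) = evec" by (auto simp: e0_def evec_def)
  have hN: "\<forall>i<n. int m dvd (Uop n ^^ (N + ?C)) evec i - (Uop n ^^ N) evec i"
    using N unfolding cyc_iff[OF m0 n ez] ee .
  have "Per n m ?C" unfolding Per_def
  proof (intro exI[of _ N] allI impI)
    fix v :: "nat \<Rightarrow> int" and i :: nat assume i: "i < n"
    have "(Uop n ^^ (N + ?C)) v i - (Uop n ^^ N) v i =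
      (\<Sum>j<n. v j * ((Uop n ^^ (N + ?C)) evec ((i + (n - j)) mod n) - (Uop n ^^ N) evec ((i + (n - j)) mod n)))"
      unfolding rep[OF i] by (simp add: sum_subtractf algebra_simps)
    also have "int m dvd \<dots>"
    proof (rule dvd_sum)
      fix j assume "j \<in> {..<n}"
      have "(i + (n - j)) mod n < n" using n by simp
      then show "int m dvd v j * ((Uop n ^^ (N + ?C)) evec ((i + (n - j)) mod n) - (Uop n ^^ N) evec ((i + (n - j)) mod n))"
        using hN by simp
    qed
    finally show "int m dvd (Uop n ^^ (N + ?C)) v i - (Uop n ^^ N) v i" .
  qed
  then show ?thesis unfolding minper_def using C0 by (intro Least_le) simp
qed

lemma finite_zvecs: "finite (zvecs m n)"
proof -
  have "zvecs m n = {f. \<forall>x. (x \<in> {..<n} \<longrightarrow> f x \<in> {..<m}) \<and> (x \<notin> {..<n} \<longrightarrow> f x = 0)}"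
    unfolding zvecs_def by auto
  moreover have "finite {f. \<forall>x. (x \<in> {..<n} \<longrightarrow> f x \<in> {..<m}) \<and> (x \<notin> {..<n} \<longrightarrow> f x = (0::nat))}"
    by (rule finite_set_of_finite_funs) auto
  ultimately show ?thesis by simp
qed

lemma Pmax_eq:
  assumes m: "1 < m" and n: "0 < n" and P: "Per n m Q" "0 < Q"
  shows "Pmax m n = minper n m"
proof -
  have m0: "0 < m" using m by simp
  have mp: "0 < minper n m \<and> Per n m (minper n m) \<and> minper n m dvd Q" by (rule minper[OF P])
  have ez: "e0 \<in> zvecs m n" using m n unfolding zvecs_def e0_def by auto
  have "cycle_length m n e0 = minper n m"
    using cl_le[OF m0 n ez] mp cl_e0[OF m n P] by (meson le_antisym)
  then have "minper n m \<in> cycle_length m n ` zvecs m n" using ez by (metis image_eqI)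
  then show ?thesis unfolding Pmax_def
    using finite_zvecs cl_le[OF m0 n _] mp ez
    by (intro Max_eqI) auto
qed

theorem proposition5p3:
  fixes p n :: nat
  assumes "prime p" and "p > 2" and "\<not> wieferich p"
    and "n > 0" and "\<not> p dvd n"
  shows "Pmax (p ^ 2) n = p * Pmax p n \<and> Pmax (p ^ 3) n = p ^ 2 * Pmax p n"
proof -
  have p: "prime p" "p > 2" using assms by auto
  have n: "0 < n" using assms by simp
  have nw: "\<not> [2^(p-1) = 1] (mod p^2)" using assms(1,3) unfolding wieferich_def by simp
  obtain K where K: "Per n p K" "0 < K" "\<not> p dvd K"
    using Per_frob[OF p(1) n assms(5)] by blast
  define m1 where "m1 = minper n p"
  define m2 where "m2 = minper n (p^2)"
  define m3 where "m3 = minper n (p^3)"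
  have M1: "0 < m1" "Per n p m1" "m1 dvd K" using minper[OF K(1,2)] unfolding m1_def by auto
  have nm1: "\<not> p dvd m1" using M1(3) K(3) dvd_trans by blast
  have P2: "Per n (p^2) (p * m1)" using Per_lift[of 1 n p m1] M1(2) by (simp add: numeral_2_eq_2)
  have pm1: "0 < p * m1" using M1 p by simp
  have M2: "0 < m2" "Per n (p^2) m2" "m2 dvd p * m1" using minper[OF P2 pm1] unfolding m2_def by auto
  have "Per n p m2" using Per_down[OF _ M2(2), of p] by simp
  then have "m1 dvd m2" using minper M2(1) unfolding m1_def by blast
  then obtain c where c: "m2 = m1 * c" by (elim dvdE)
  have "c dvd p" using M2(3) M1(1) unfolding c by (simp add: mult.commute)
  then have "c = 1 \<or> c = p" using p(1) by (simp add: prime_nat_iff)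
  moreover have "c \<noteq> 1"
  proof
    assume "c = 1"
    then have "Per n (p^2) m1" using M2(2) c by simp
    then have "[2^m1 = 1] (mod p^2)" using Per_two coprime_2_pk[OF p] n by blast
    then show False using nt1[OF p nm1] nw by blast
  qed
  ultimately have m2e: "m2 = p * m1" using c by simp
  have P3: "Per n (p^3) (p * m2)" using Per_lift[of 2 n p m2] M2(2) by (simp add: numeral_3_eq_3)
  have pm2: "0 < p * m2" using M2 p by simp
  have M3: "0 < m3" "Per n (p^3) m3" "m3 dvd p * m2" using minper[OF P3 pm2] unfolding m3_def by auto
  have "Per n (p^2) m3" using Per_down[OF _ M3(2), of "p^2"] by (simp add: numeral_3_eq_3 numeral_2_eq_2)
  then have "m2 dvd m3" using minper M3(1) unfolding m2_def by blast
  then obtain d where d: "m3 = m2 * d" by (elim dvdE)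
  have "d dvd p" using M3(3) M2(1) unfolding d by (simp add: mult.commute)
  then have "d = 1 \<or> d = p" using p(1) by (simp add: prime_nat_iff)
  moreover have "d \<noteq> 1"
  proof
    assume "d = 1"
    then have "Per n (p^3) (p * m1)" using M3(2) d m2e by simp
    then have "[2^(p * m1) = 1] (mod p^3)" using Per_two coprime_2_pk[OF p] n by blast
    then show False using nt2[OF p nm1] nt3[OF p nw] by blast
  qed
  ultimately have m3e: "m3 = p^2 * m1" using d m2e by (auto simp: power2_eq_square)
  have p1: "1 < p" using p by simp
  have "Pmax p n = m1" unfolding m1_def by (rule Pmax_eq[OF p1 n K(1,2)])
  moreover have "Pmax (p^2) n = m2" unfolding m2_def
    by (rule Pmax_eq[OF _ n P2 pm1]) (rule one_less_power[OF p1], simp)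
  moreover have "Pmax (p^3) n = m3" unfolding m3_def
    by (rule Pmax_eq[OF _ n P3 pm2]) (rule one_less_power[OF p1], simp)
  ultimately show ?thesis using m2e m3e by simp
qed

end
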